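(* Let $N$ be a positive integer, $L>0$, and $\zeta=(\zeta_0,\dots,\zeta_{N+2})\in\mathbb{R}^{N+3}$ with $\zeta_0>\zeta_1>\dots>\zeta_{N+1}>\zeta_{N+2}=0$. With $W^\zeta$ as defined in the context, for any $y\in\mathbb{R}^{N+1}$ the minimization problem defining $W^\zeta(y)$ has an optimal solution $(\nu^*,\alpha^* )$ with $\alpha^*\in\Delta_{N+2}$ of the form \[ \alpha^*=(\underbrace{0,\dots,0}_{m},\alpha^*_m,1-\alpha^*_m,\underbrace{0,\dots,0}_{N-m}) \] for some $m\in\{0,\dots,N\}$.
   Context: Let $e_0,\dots,e_N$ denote the standard unit vectors of $\mathbb{R}^{N+1}$ (zero-based indexing). Define for $i=0,\dots,N+1$: $x_i=-\sum_{j=0}^{i-1}\frac{\zeta_j-\zeta_{i+1}}{\sqrt{\zeta_j-\zeta_{j+1}}}e_j\in\mathbb{R}^{N+1}$; $g_i=L\sqrt{\zeta_i-\zeta_{i+1}}\,e_i$ for $i=0,\dots,N$ and $g_{N+1}=0$; $f_i=\frac L2(\zeta_i+\zeta_{i+1})$ for $i=0,\dots,N$ and $f_{N+1}=0$. For $y\in\mathbb{R}^{N+1}$, $\nu\in\mathbb{R}^{N+1}$, $\alpha=(\alpha_0,\dots,\alpha_{N+1})\in\mathbb{R}^{N+2}$ let $w^\zeta(y,\nu,\alpha)=\frac L2\|y+\nu-\sum_{i=0}^{N+1}\alpha_i(x_i-\frac1Lg_i)\|^2+\sum_{i=0}^{N+1}\alpha_i(f_i-\frac1{2L}\|g_i\|^2)$,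 and $W^\zeta(y)=\min\{w^\zeta(y,\nu,\alpha):\nu\in\mathbb{R}^{N+1}_+,\ \alpha\in\Delta_{N+2}\}$, where $\mathbb{R}^{N+1}_+$ is the nonnegative orthant and $\Delta_{N+2}=\{\alpha\in\mathbb{R}^{N+2}:\alpha_i\geq0,\ \sum_i\alpha_i=1\}$ (entries indexed $0,\dots,N+1$). *)

theory Defs
  imports Complex_Main
begin

text \<open>Vectors in R^(N+1) are represented as functions nat => real, of which only the
components 0..N are used; alpha in R^(N+2) uses components 0..N+1.\<close>

definition xv :: "(nat \<Rightarrow> real) \<Rightarrow> nat \<Rightarrow> nat \<Rightarrow> real" where
  "xv \<zeta> i j = (if j < i then - ((\<zeta> j - \<zeta> (i+1)) / sqrt (\<zeta> j - \<zeta> (j+1))) else 0)"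

definition gv :: "nat \<Rightarrow> real \<Rightarrow> (nat \<Rightarrow> real) \<Rightarrow> nat \<Rightarrow> nat \<Rightarrow> real" where
  "gv N L \<zeta> i j = (if i \<le> N \<and> j = i then L * sqrt (\<zeta> i - \<zeta> (i+1)) else 0)"

definition fv :: "nat \<Rightarrow> real \<Rightarrow> (nat \<Rightarrow> real) \<Rightarrow> nat \<Rightarrow> real" where
  "fv N L \<zeta> i = (if i \<le> N then L / 2 * (\<zeta> i + \<zeta> (i+1)) else 0)"

definition wz :: "nat \<Rightarrow> real \<Rightarrow> (nat \<Rightarrow> real) \<Rightarrow> (nat \<Rightarrow> real) \<Rightarrow> (nat \<Rightarrow> real)
                   \<Rightarrow> (nat \<Rightarrow> real) \<Rightarrow> real" where
  "wz N L \<zeta> y \<nu> \<alpha> =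
     L / 2 * (\<Sum>j\<le>N. (y j + \<nu> j - (\<Sum>i\<le>N+1. \<alpha> i * (xv \<zeta> i j - gv N L \<zeta> i j / L)))\<^sup>2)
     + (\<Sum>i\<le>N+1. \<alpha> i * (fv N L \<zeta> i - (\<Sum>j\<le>N. (gv N L \<zeta> i j)\<^sup>2) / (2 * L)))"

definition feasible :: "nat \<Rightarrow> (nat \<Rightarrow> real) \<Rightarrow> (nat \<Rightarrow> real) \<Rightarrow> bool" where
  "feasible N \<nu> \<alpha> \<longleftrightarrow> (\<forall>j\<le>N. \<nu> j \<ge> 0) \<and> (\<forall>i\<le>N+1. \<alpha> i \<ge> 0) \<and> (\<Sum>i\<le>N+1. \<alpha> i) = 1"

end

theory Submission
  imports Defs
begin

lemma zmono:
  fixes \<zeta> :: "nat \<Rightarrow> real"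
  assumes "\<And>i. i \<le> N + 1 \<Longrightarrow> \<zeta> i > \<zeta> (i+1)"
  shows "a < b \<Longrightarrow> b \<le> N+2 \<Longrightarrow> \<zeta> b < \<zeta> a"
proof (induction b)
  case 0 then show ?case by simp
next
  case (Suc b)
  have s: "\<zeta> (Suc b) < \<zeta> b" using assms[of b] Suc.prems by simp
  show ?case
  proof (cases "a = b")
    case True then show ?thesis using s by simp
  next
    case False then show ?thesis using Suc s by simp
  qed
qed

lemma zcoef:
  fixes \<zeta> :: "nat \<Rightarrow> real"
  assumes L: "L > 0" and d: "\<And>i. i \<le> N + 1 \<Longrightarrow> \<zeta> i > \<zeta> (i+1)"
    and i: "i \<le> N+1" and j: "j \<le> N"
  shows "xv \<zeta> i j - gv N L \<zeta> i j / L = - (max 0 (\<zeta> j - \<zeta> (i+1)) / sqrt (\<zeta> j - \<zeta> (j+1)))"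
proof -
  have dj: "\<zeta> j - \<zeta> (j+1) > 0" using d[of j] j by simp
  consider "j < i" | "j = i" | "i < j" by linarith
  then show ?thesis
  proof cases
    case 1
    have "\<zeta> (i+1) < \<zeta> j" using zmono[where N=N and \<zeta>=\<zeta>, OF d, of j "i+1"] 1 i by simp
    then show ?thesis using 1 by (simp add: xv_def gv_def)
  next
    case 2
    have "L * sqrt (\<zeta> j - \<zeta> (j+1)) / L = (\<zeta> j - \<zeta> (j+1)) / sqrt (\<zeta> j - \<zeta> (j+1))"
      using L dj by (simp add: real_div_sqrt)
    then show ?thesis using 2 j dj by (simp add: xv_def gv_def)
  next
    case 3
    have "\<zeta> j \<le> \<zeta> (i+1)"
    proof (cases "j = i+1")
      case False
      then show ?thesis using zmono[where N=N and \<zeta>=\<zeta>, OF d, of "i+1" j] 3 j by simp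
    qed simp
    then show ?thesis using 3 by (simp add: xv_def gv_def)
  qed
qed

lemma kcoef:
  fixes \<zeta> :: "nat \<Rightarrow> real"
  assumes L: "L > 0" and d: "\<And>i. i \<le> N + 1 \<Longrightarrow> \<zeta> i > \<zeta> (i+1)"
    and z0: "\<zeta> (N+2) = 0" and i: "i \<le> N+1"
  shows "fv N L \<zeta> i - (\<Sum>j\<le>N. (gv N L \<zeta> i j)\<^sup>2) / (2 * L) = L * \<zeta> (i+1)"
proof (cases "i \<le> N")
  case True
  have dj: "\<zeta> i - \<zeta> (i+1) > 0" using d[of i] i by simp
  have "(\<Sum>j\<le>N. (gv N L \<zeta> i j)\<^sup>2) = (\<Sum>j\<le>N. if j = i then L^2 * (\<zeta> i - \<zeta> (i+1)) else 0)"
    by (rule sum.cong) (use dj in \<open>auto simp: gv_def power_mult_distrib\<close>)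
  also have "\<dots> = L^2 * (\<zeta> i - \<zeta> (i+1))" using True by simp
  finally show ?thesis using True L by (simp add: fv_def field_simps power2_eq_square)
next
  case False
  then have "i = N+1" using i by simp
  then show ?thesis using z0 by (simp add: fv_def gv_def)
qed

lemma wform:
  fixes \<zeta> :: "nat \<Rightarrow> real"
  assumes L: "L > 0" and d: "\<And>i. i \<le> N + 1 \<Longrightarrow> \<zeta> i > \<zeta> (i+1)"
    and z0: "\<zeta> (N+2) = 0"
  shows "wz N L \<zeta> y \<nu> \<alpha> = L / 2 * (\<Sum>j\<le>N. (y j + \<nu> j
      + (\<Sum>i\<le>N+1. \<alpha> i * max 0 (\<zeta> j - \<zeta> (i+1))) / sqrt (\<zeta> j - \<zeta> (j+1)))\<^sup>2)
      + L * (\<Sum>i\<le>N+1. \<alpha> i * \<zeta> (i+1))"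
proof -
  have A: "(\<Sum>i\<le>N+1. \<alpha> i * (xv \<zeta> i j - gv N L \<zeta> i j / L))
     = - ((\<Sum>i\<le>N+1. \<alpha> i * max 0 (\<zeta> j - \<zeta> (i+1))) / sqrt (\<zeta> j - \<zeta> (j+1)))" if j: "j \<le> N" for j
  proof -
    have "(\<Sum>i\<le>N+1. \<alpha> i * (xv \<zeta> i j - gv N L \<zeta> i j / L))
       = (\<Sum>i\<le>N+1. - (\<alpha> i * max 0 (\<zeta> j - \<zeta> (i+1)) / sqrt (\<zeta> j - \<zeta> (j+1))))"
      by (rule sum.cong) (auto simp: zcoef[where N=N and \<zeta>=\<zeta>, OF L d _ j])
    also have "\<dots> = - ((\<Sum>i\<le>N+1. \<alpha> i * max 0 (\<zeta> j - \<zeta> (i+1))) / sqrt (\<zeta> j - \<zeta> (j+1)))"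
      by (simp only: sum_negf sum_divide_distrib)
    finally show ?thesis .
  qed
  have B: "(\<Sum>i\<le>N+1. \<alpha> i * (fv N L \<zeta> i - (\<Sum>j\<le>N. (gv N L \<zeta> i j)\<^sup>2) / (2 * L)))
      = L * (\<Sum>i\<le>N+1. \<alpha> i * \<zeta> (i+1))"
  proof -
    have "(\<Sum>i\<le>N+1. \<alpha> i * (fv N L \<zeta> i - (\<Sum>j\<le>N. (gv N L \<zeta> i j)\<^sup>2) / (2 * L)))
       = (\<Sum>i\<le>N+1. L * (\<alpha> i * \<zeta> (i+1)))"
      by (rule sum.cong) (auto simp: kcoef[where N=N and \<zeta>=\<zeta>, OF L d z0])
    then show ?thesis by (simp only: sum_distrib_left)
  qed
  have C: "(\<Sum>j\<le>N. (y j + \<nu> j - (\<Sum>i\<le>N+1. \<alpha> i * (xv \<zeta> i j - gv N L \<zeta> i j / L)))\<^sup>2)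
     = (\<Sum>j\<le>N. (y j + \<nu> j
      + (\<Sum>i\<le>N+1. \<alpha> i * max 0 (\<zeta> j - \<zeta> (i+1))) / sqrt (\<zeta> j - \<zeta> (j+1)))\<^sup>2)"
    proof (intro sum.cong refl)
    fix j assume "j \<in> {..N}"
    then have "j \<le> N" by simp
    then show "(y j + \<nu> j - (\<Sum>i\<le>N+1. \<alpha> i * (xv \<zeta> i j - gv N L \<zeta> i j / L)))\<^sup>2
     = (y j + \<nu> j
      + (\<Sum>i\<le>N+1. \<alpha> i * max 0 (\<zeta> j - \<zeta> (i+1))) / sqrt (\<zeta> j - \<zeta> (j+1)))\<^sup>2" by (simp only: A diff_minus_eq_add minus_minus)
  qed
  show ?thesis unfolding wz_def B C ..
qed

lemma bracket:
  fixes \<zeta> :: "nat \<Rightarrow> real"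
  assumes "\<zeta> (N+2) \<le> q" "q \<le> \<zeta> 1"
  shows "\<exists>m\<le>N. \<zeta> (m+2) \<le> q \<and> q \<le> \<zeta> (m+1)"
proof -
  define m where "m = (LEAST k. \<zeta> (k+2) \<le> q)"
  have P: "\<zeta> (m+2) \<le> q" unfolding m_def by (rule LeastI[where k=N]) (use assms in simp)
  have mN: "m \<le> N" unfolding m_def by (rule Least_le) (use assms in simp)
  have "q \<le> \<zeta> (m+1)"
  proof (cases m)
    case 0 then show ?thesis using assms by simp
  next
    case (Suc k)
    have "\<not> \<zeta> (k+2) \<le> q" using not_less_Least[of k "\<lambda>k. \<zeta> (k+2) \<le> q"] Suc m_def by simp
    then show ?thesis using Suc by simp
  qed
  then show ?thesis using P mN by blast
qed

lemma sum2:
  fixes f :: "nat \<Rightarrow> real"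
  assumes "m \<le> N"
  shows "(\<Sum>i\<le>N+1. (if i = m then t else if i = m+1 then 1 - t else 0) * f i)
     = t * f m + (1 - t) * f (m+1)"
proof -
  have "(\<Sum>i\<le>N+1. (if i = m then t else if i = m+1 then 1 - t else 0) * f i)
     = (\<Sum>i\<le>N+1. (if i = m then t * f m else 0) + (if i = m+1 then (1-t) * f (m+1) else 0))"
    by (rule sum.cong) auto
  also have "\<dots> = t * f m + (1 - t) * f (m+1)"
    using assms by (simp add: sum.distrib)
  finally show ?thesis .
qed

lemma sqmax: "(r::real) \<le> X \<Longrightarrow> (max 0 r)\<^sup>2 \<le> X\<^sup>2"
  by (cases "r \<le> 0") (auto intro: power_mono)

theorem lemma2:
  fixes N :: nat and L :: real and \<zeta> y :: "nat \<Rightarrow> real"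
  assumes "N > 0" and "L > 0"
    and "\<And>i. i \<le> N + 1 \<Longrightarrow> \<zeta> i > \<zeta> (i+1)"
    and "\<zeta> (N+2) = 0"
  shows "\<exists>\<nu> \<alpha> m. feasible N \<nu> \<alpha>
           \<and> (\<forall>\<nu>' \<alpha>'. feasible N \<nu>' \<alpha>' \<longrightarrow> wz N L \<zeta> y \<nu> \<alpha> \<le> wz N L \<zeta> y \<nu>' \<alpha>')
           \<and> m \<le> N
           \<and> (\<forall>i\<le>N+1. i \<noteq> m \<and> i \<noteq> m + 1 \<longrightarrow> \<alpha> i = 0)
           \<and> \<alpha> (m+1) = 1 - \<alpha> m"
proof -
  note L = assms(2) and d = assms(3) and z0 = assms(4)
  note mono = zmono[where N=N and \<zeta>=\<zeta>, OF d]
  define s where "s j = sqrt (\<zeta> j - \<zeta> (j+1))" for j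
  have spos: "s j > 0" if "j \<le> N" for j using d[of j] that by (simp add: s_def)
  have znn: "\<zeta> k \<ge> 0" if "k \<le> N+2" for k
  proof (cases "k = N+2")
    case False then show ?thesis using mono[of k "N+2"] that z0 by simp
  qed (use z0 in simp)
  have zle1: "\<zeta> k \<le> \<zeta> 1" if "1 \<le> k" "k \<le> N+2" for k
  proof (cases "k = 1")
    case False then show ?thesis using mono[of 1 k] that by simp
  qed simp
  define H where "H q = L/2 * (\<Sum>j\<le>N. (max 0 (y j + max 0 (\<zeta> j - q) / s j))\<^sup>2) + L * q" for q
  have cont: "continuous_on {0..\<zeta> 1} H" unfolding H_def
    by (intro continuous_intros) (use spos in \<open>fastforce\<close>)
  have z1: "\<zeta> 1 \<ge> 0" using znn[of 1] by simp
  obtain q0 where q0: "q0 \<in> {0..\<zeta> 1}" and q0min: "\<And>q. q \<in> {0..\<zeta> 1} \<Longrightarrow> H q0 \<le> H q"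
    using continuous_attains_inf[OF compact_Icc _ cont] z1 by auto
  obtain m where mN: "m \<le> N" and m1: "\<zeta> (m+2) \<le> q0" and m2: "q0 \<le> \<zeta> (m+1)"
    using bracket[of \<zeta> N q0] q0 z0 by auto
  have dm: "\<zeta> (m+1) - \<zeta> (m+2) > 0" using d[of "m+1"] mN by simp
  define t where "t = (q0 - \<zeta> (m+2)) / (\<zeta> (m+1) - \<zeta> (m+2))"
  have t0: "t \<ge> 0" and t1: "t \<le> 1" using dm m1 m2 by (auto simp: t_def field_simps)
  have tq: "t * \<zeta> (m+1) + (1 - t) * \<zeta> (m+2) = q0"
  proof -
    have "t * (\<zeta> (m+1) - \<zeta> (m+2)) = q0 - \<zeta> (m+2)" using dm by (simp add: t_def)
    then show ?thesis by (simp add: algebra_simps)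
  qed
  define \<alpha> where "\<alpha> i = (if i = m then t else if i = m+1 then 1 - t else 0)" for i
  define \<nu> where "\<nu> j = max 0 (- (y j + max 0 (\<zeta> j - q0) / s j))" for j
  have feas: "feasible N \<nu> \<alpha>"
    unfolding feasible_def
  proof (intro conjI allI impI)
    show "(\<Sum>i\<le>N+1. \<alpha> i) = 1"
      using sum2[OF mN, of t "\<lambda>_. 1"] by (simp add: \<alpha>_def)
  qed (use t0 t1 in \<open>auto simp: \<nu>_def \<alpha>_def\<close>)
  have Qa: "(\<Sum>i\<le>N+1. \<alpha> i * \<zeta> (i+1)) = q0"
    using sum2[OF mN, of t "\<lambda>i. \<zeta> (i+1)"] tq by (simp add: \<alpha>_def)
  have Pa: "(\<Sum>i\<le>N+1. \<alpha> i * max 0 (\<zeta> j - \<zeta> (i+1))) = max 0 (\<zeta> j - q0)" if j: "j \<le> N" for j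
  proof -
    have e: "(\<Sum>i\<le>N+1. \<alpha> i * max 0 (\<zeta> j - \<zeta> (i+1)))
       = t * max 0 (\<zeta> j - \<zeta> (m+1)) + (1 - t) * max 0 (\<zeta> j - \<zeta> (m+2))"
      using sum2[OF mN, of t "\<lambda>i. max 0 (\<zeta> j - \<zeta> (i+1))"] by (simp add: \<alpha>_def)
    show ?thesis
    proof (cases "j \<le> m+1")
      case True
      have a: "\<zeta> j \<ge> \<zeta> (m+1)"
      proof (cases "j = m+1")
        case False then show ?thesis using mono[of j "m+1"] True mN by simp
      qed simp
      then have b: "\<zeta> j \<ge> \<zeta> (m+2)" using dm by simp
      have "t * (\<zeta> j - \<zeta> (m+1)) + (1 - t) * (\<zeta> j - \<zeta> (m+2)) = \<zeta> j - q0"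
        using tq by (simp add: algebra_simps)
      then show ?thesis using e a b m2 by simp
    next
      case False
      have a: "\<zeta> j \<le> \<zeta> (m+2)"
      proof (cases "j = m+2")
        case False then show ?thesis using mono[of "m+2" j] \<open>\<not> j \<le> m+1\<close> j by simp
      qed simp
      then show ?thesis using e m1 dm by simp
    qed
  qed
  have wstar: "wz N L \<zeta> y \<nu> \<alpha> = H q0"
  proof -
    have "wz N L \<zeta> y \<nu> \<alpha> = L / 2 * (\<Sum>j\<le>N. (y j + \<nu> j
      + (\<Sum>i\<le>N+1. \<alpha> i * max 0 (\<zeta> j - \<zeta> (i+1))) / s j)\<^sup>2)
      + L * (\<Sum>i\<le>N+1. \<alpha> i * \<zeta> (i+1))"
      using wform[where N=N and \<zeta>=\<zeta>, OF L d z0] by (simp add: s_def)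
    also have "(\<Sum>j\<le>N. (y j + \<nu> j
      + (\<Sum>i\<le>N+1. \<alpha> i * max 0 (\<zeta> j - \<zeta> (i+1))) / s j)\<^sup>2)
      = (\<Sum>j\<le>N. (max 0 (y j + max 0 (\<zeta> j - q0) / s j))\<^sup>2)"
    proof (intro sum.cong refl)
      fix j assume "j \<in> {..N}"
      then have "j \<le> N" by simp
      then show "(y j + \<nu> j + (\<Sum>i\<le>N+1. \<alpha> i * max 0 (\<zeta> j - \<zeta> (i+1))) / s j)\<^sup>2
          = (max 0 (y j + max 0 (\<zeta> j - q0) / s j))\<^sup>2"
        by (simp only: Pa) (simp add: \<nu>_def max_def)
    qed
    finally show ?thesis unfolding Qa H_def .
  qed
  have opt: "wz N L \<zeta> y \<nu> \<alpha> \<le> wz N L \<zeta> y \<nu>' \<alpha>'" if f: "feasible N \<nu>' \<alpha>'" for \<nu>' \<alpha>'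
  proof -
    define Q where "Q = (\<Sum>i\<le>N+1. \<alpha>' i * \<zeta> (i+1))"
    have an: "\<And>i. i \<le> N+1 \<Longrightarrow> \<alpha>' i \<ge> 0" and as: "(\<Sum>i\<le>N+1. \<alpha>' i) = 1"
      and nn: "\<And>j. j \<le> N \<Longrightarrow> \<nu>' j \<ge> 0" using f by (auto simp: feasible_def)
    have Q0: "Q \<ge> 0" unfolding Q_def by (intro sum_nonneg) (use an znn in auto)
    have Q1: "Q \<le> \<zeta> 1"
    proof -
      have "Q \<le> (\<Sum>i\<le>N+1. \<alpha>' i * \<zeta> 1)" unfolding Q_def
        by (intro sum_mono mult_left_mono) (use an zle1 in auto)
      also have "\<dots> = \<zeta> 1" using as by (simp add: sum_distrib_right[symmetric])
      finally show ?thesis .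
    qed
    have P: "(\<Sum>i\<le>N+1. \<alpha>' i * max 0 (\<zeta> j - \<zeta> (i+1))) \<ge> max 0 (\<zeta> j - Q)" for j
    proof -
      have "0 \<le> (\<Sum>i\<le>N+1. \<alpha>' i * max 0 (\<zeta> j - \<zeta> (i+1)))"
        by (intro sum_nonneg) (use an in auto)
      moreover have "(\<Sum>i\<le>N+1. \<alpha>' i * (\<zeta> j - \<zeta> (i+1))) \<le> (\<Sum>i\<le>N+1. \<alpha>' i * max 0 (\<zeta> j - \<zeta> (i+1)))"
        by (intro sum_mono mult_left_mono) (use an in auto)
      moreover have "(\<Sum>i\<le>N+1. \<alpha>' i * (\<zeta> j - \<zeta> (i+1))) = \<zeta> j - Q"
        using as by (simp add: Q_def right_diff_distrib sum_subtractf sum_distrib_right[symmetric])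
      ultimately show ?thesis by simp
    qed
    have "H Q \<le> wz N L \<zeta> y \<nu>' \<alpha>'"
    proof -
      have "(\<Sum>j\<le>N. (max 0 (y j + max 0 (\<zeta> j - Q) / s j))\<^sup>2)
        \<le> (\<Sum>j\<le>N. (y j + \<nu>' j + (\<Sum>i\<le>N+1. \<alpha>' i * max 0 (\<zeta> j - \<zeta> (i+1))) / s j)\<^sup>2)"
      proof (intro sum_mono sqmax)
        fix j assume "j \<in> {..N}"
        then have j: "j \<le> N" by simp
        have "max 0 (\<zeta> j - Q) / s j \<le> (\<Sum>i\<le>N+1. \<alpha>' i * max 0 (\<zeta> j - \<zeta> (i+1))) / s j"
          using P[of j] spos[OF j] by (simp add: divide_right_mono)
        then show "y j + max 0 (\<zeta> j - Q) / s j
          \<le> y j + \<nu>' j + (\<Sum>i\<le>N+1. \<alpha>' i * max 0 (\<zeta> j - \<zeta> (i+1))) / s j"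
          using nn[OF j] by simp
      qed
      then have "H Q \<le> L / 2 * (\<Sum>j\<le>N. (y j + \<nu>' j
        + (\<Sum>i\<le>N+1. \<alpha>' i * max 0 (\<zeta> j - \<zeta> (i+1))) / s j)\<^sup>2) + L * Q"
        unfolding H_def using L by simp
      also have "\<dots> = wz N L \<zeta> y \<nu>' \<alpha>'"
        using wform[where N=N and \<zeta>=\<zeta>, OF L d z0] by (simp add: s_def Q_def)
      finally show ?thesis .
    qed
    moreover have "H q0 \<le> H Q" using q0min Q0 Q1 by simp
    ultimately show ?thesis using wstar by simp
  qed
  have sup: "\<forall>i\<le>N+1. i \<noteq> m \<and> i \<noteq> m + 1 \<longrightarrow> \<alpha> i = 0" by (simp add: \<alpha>_def)
  have "\<alpha> (m+1) = 1 - \<alpha> m" by (simp add: \<alpha>_def)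
  then show ?thesis using feas opt mN sup by blast
qed

end
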